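(* In the finite element setting described in the context, let each element mass matrix $M_e$ be symmetric positive definite, fix an integer $0<r<m$, and assume $\lambda_{m-r}(K_e,M_e)>0$ for every element $e$. For each element define $$\overline{M}_e=M_e+V_e\,g(D_{e,2})\,V_e^T,\qquad V_e=M_eU_{e,2},\qquad g(\lambda)=\frac{\lambda}{\lambda_{m-r}(K_e,M_e)}-1,$$ where $D_{e,2}=\mathrm{diag}(\lambda_{m-r+1}(K_e,M_e),\dots,\lambda_m(K_e,M_e))$ and $U_{e,2}\in\mathbb{R}^{m\times r}$ has as columns the corresponding $M_e$-orthonormal eigenvectors of $(K_e,M_e)$ ($g$ applied entrywise to the diagonal). Let $M=\sum_eL_e^TM_eL_e$ and $\overline{M}=\sum_eL_e^T\overline{M}_eL_e$. Then for all $i=1,\dots,n$, $$1\le\frac{\omega_i}{\overline{\omega}_i}\le\max_e\frac{\omega_{m,e}}{\omega_{m-r,e}},$$ where $\omega_i=\sqrt{\lambda_i(K,M)}$, $\overline{\omega}_i=\sqrt{\lambda_i(K,\overline{M})}$ and $\omega_{j,e}=\sqrt{\lambda_j(K_e,M_e)}$.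
   Context: Finite element setting: there are $n$ global degrees of freedom and $N$ elements, each with $m$ local degrees of freedom. For each element $e$, $L_e\in\mathbb{R}^{m\times n}$ satisfies $L_e^T=[\mathbf{e}_{i_1},\dots,\mathbf{e}_{i_m}]$ for distinct indices $i_1,\dots,i_m$ (columns of $I_n$), and every global index appears for at least one element. Element matrices are assembled as $A=\sum_{e=1}^N L_e^TA_eL_e$. The global stiffness matrix is $K=\sum_e L_e^TK_eL_e$ with each $K_e$ symmetric positive semidefinite, and $K$ is assumed symmetric positive definite. Generalized eigenvalues of a pair ($A$ symmetric, $B$ symmetric positive definite) are numbered in ascending order; "$M_e$-orthonormal" means $U_{e,2}^TM_eU_{e,2}=I_r$. *)

theory Defs
  imports "HOL-Analysis.Analysis" "HOL-Computational_Algebra.Polynomial"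
begin

definition gen_charpoly :: "real^'n^'n \<Rightarrow> real^'n^'n \<Rightarrow> real poly" where
  "gen_charpoly A B = det (\<chi> i j. [: A$i$j, - (B$i$j) :])"

text \<open>Generalized eigenvalues of (A,B) counted with algebraic multiplicity, in ascending order;
  gev A B i is the i-th one (1-based, i = 1..CARD('n)).\<close>
definition gev :: "real^'n^'n \<Rightarrow> real^'n^'n \<Rightarrow> nat \<Rightarrow> real" where
  "gev A B i = sorted_list_of_multiset (proots (gen_charpoly A B)) ! (i - 1)"

definition sym_mat :: "real^'n^'n \<Rightarrow> bool" where
  "sym_mat A \<longleftrightarrow> transpose A = A"

definition psd_mat :: "real^'n^'n \<Rightarrow> bool" where
  "psd_mat A \<longleftrightarrow> sym_mat A \<and> (\<forall>x. 0 \<le> x \<bullet> (A *v x))"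

definition pd_mat :: "real^'n^'n \<Rightarrow> bool" where
  "pd_mat A \<longleftrightarrow> sym_mat A \<and> (\<forall>x. x \<noteq> 0 \<longrightarrow> 0 < x \<bullet> (A *v x))"

definition outer :: "real^'m \<Rightarrow> real^'m \<Rightarrow> real^'m^'m" where
  "outer v w = (\<chi> i j. v$i * w$j)"

definition assemble :: "('e::finite \<Rightarrow> real^'n^'m) \<Rightarrow> ('e \<Rightarrow> real^'m^'m) \<Rightarrow> real^'n^'n" where
  "assemble L A = (\<Sum>e\<in>UNIV. transpose (L e) ** A e ** L e)"

text \<open>Modified element mass matrix  M_e + V g(D_2) V^T  with V = M_e U_2, written as a
  sum over the r columns u_1..u_r of U_2 (eigenvalues lambda_{m-r+k}).\<close>
definition mod_mass :: "real^'m^'m \<Rightarrow> real^'m^'m \<Rightarrow> nat \<Rightarrow> (nat \<Rightarrow> real^'m) \<Rightarrow> real^'m^'m" where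
  "mod_mass Ke Me r u = Me + (\<Sum>k\<in>{1..r}.
      (gev Ke Me (CARD('m) - r + k) / gev Ke Me (CARD('m) - r) - 1) *\<^sub>R outer (Me *v u k) (Me *v u k))"

end

theory Submission
  imports Defs
begin


lemma sym_inner: assumes "sym_mat A" shows "x \<bullet> (A *v y) = y \<bullet> (A *v (x::real^'n))"
proof -
  have "x \<bullet> (A *v y) = (x v* A) \<bullet> y" by (simp add: dot_lmul_matrix)
  also have "x v* A = transpose A *v x" by simp
  also have "\<dots> = A *v x" using assms by (simp add: sym_mat_def)
  finally show ?thesis by (simp add: inner_commute)
qed

lemma mv_sum: "A *v (\<Sum>i\<in>S. f i) = (\<Sum>i\<in>S. A *v f i)"
  by (induction S rule: infinite_finite_induct) (auto simp: matrix_vector_right_distrib)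

lemma sum_mv: "(\<Sum>i\<in>S. f i) *v x = (\<Sum>i\<in>S. f i *v x)"
  by (induction S rule: infinite_finite_induct) (auto simp: matrix_vector_mult_add_rdistrib)

lemma scaleR_mv: "(c *\<^sub>R A) *v x = c *\<^sub>R (A *v (x::real^'n))"
  by (simp add: vec_eq_iff matrix_vector_mult_def sum_distrib_left mult.assoc)

lemma quad_scale: "(c *\<^sub>R x) \<bullet> (A *v (c *\<^sub>R x)) = c^2 * (x \<bullet> (A *v (x::real^'n)))"
  by (simp add: matrix_vector_mult_scaleR power2_eq_square)

lemma lin_coef_zero:
  fixes a b :: real
  assumes "\<And>t. 0 \<le> 2*t*a + t^2*b" shows "a = 0"
proof (rule ccontr)
  assume a: "a \<noteq> 0"
  define B where "B = \<bar>b\<bar> + 1"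
  have pos: "B > 0" unfolding B_def by simp
  define t where "t = - a / B"
  have "2*t*a + t^2*b = (a^2 / B^2) * (b - 2*B)"
    unfolding t_def using pos by (simp add: field_simps power2_eq_square)
  also have "\<dots> < 0"
  proof (rule mult_pos_neg)
    show "0 < a^2 / B^2" using a pos by simp
    show "b - 2*B < 0" unfolding B_def by (simp add: abs_if)
  qed
  finally show False using assms[of t] by simp
qed

definition eigsys :: "real^'n^'n \<Rightarrow> real^'n^'n \<Rightarrow> nat \<Rightarrow> (nat \<Rightarrow> real^'n) \<Rightarrow> (nat \<Rightarrow> real) \<Rightarrow> bool" where
  "eigsys K M k v \<mu> \<longleftrightarrow>
     (\<forall>j<k. K *v v j = \<mu> j *\<^sub>R (M *v v j))
   \<and> (\<forall>j<k. \<forall>l<k. v j \<bullet> (M *v v l) = (if j = l then 1 else 0))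
   \<and> (\<forall>j l. j \<le> l \<longrightarrow> l < k \<longrightarrow> \<mu> j \<le> \<mu> l)
   \<and> (\<forall>j<k. \<forall>x. (\<forall>l<j. v l \<bullet> (M *v x) = 0) \<longrightarrow> \<mu> j * (x \<bullet> (M *v x)) \<le> x \<bullet> (K *v x))"

lemma orth_nonzero:
  fixes w :: "nat \<Rightarrow> real^'n"
  assumes "k < CARD('n)"
  shows "\<exists>z. z \<noteq> 0 \<and> (\<forall>l<k. w l \<bullet> z = 0)"
proof -
  let ?A = "span (w ` {..<k})"
  let ?C = "{y \<in> UNIV. \<forall>x\<in>?A. orthogonal x y}"
  have "dim ?C + dim ?A = dim (UNIV :: (real^'n) set)"
    by (rule dim_subspace_orthogonal_to_vectors) auto
  moreover have "dim ?A \<le> k"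
  proof -
    have "dim (w ` {..<k}) \<le> card (w ` {..<k})"
      by (rule dim_le_card) (auto intro: span_base)
    then show ?thesis using card_image_le[of "{..<k}" w] by (simp add: dim_span)
  qed
  ultimately have "dim ?C > 0" using assms by simp
  then have "\<not> ?C \<subseteq> {0}" by (simp only: dim_eq_0[symmetric])
  then obtain z where "z \<in> ?C" "z \<noteq> 0" by blast
  then show ?thesis by (auto simp: orthogonal_def intro: span_base)
qed

lemma quad_expand:
  assumes "sym_mat A"
  shows "(w + t *\<^sub>R y) \<bullet> (A *v (w + t *\<^sub>R y)) =
     w \<bullet> (A *v w) + 2*t*(y \<bullet> (A *v w)) + t^2*(y \<bullet> (A *v (y::real^'n)))"
  using sym_inner[OF assms, of w y]
  by (simp add: matrix_vector_right_distrib matrix_vector_mult_scaleR inner_add_left inner_add_right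
      power2_eq_square algebra_simps)

lemma cont_quad: "continuous_on S (\<lambda>x. x \<bullet> (A *v (x::real^'n)))"
  by (intro continuous_intros linear_continuous_on[OF bounded_linearI'] )
     (auto simp: matrix_vector_right_distrib matrix_vector_mult_scaleR)

lemma eigsys_step:
  fixes K M :: "real^'n^'n"
  assumes symK: "sym_mat K" and pdM: "pd_mat M" and E: "eigsys K M k v \<mu>" and kn: "k < CARD('n)"
  shows "\<exists>w c. eigsys K M (Suc k) (v(k := w)) (\<mu>(k := c))"
proof -
  have symM: "sym_mat M" using pdM by (simp add: pd_mat_def)
  have Mpos: "\<And>x. x \<noteq> 0 \<Longrightarrow> 0 < x \<bullet> (M *v x)" using pdM by (simp add: pd_mat_def)
  have swapM: "\<And>x y. x \<bullet> (M *v y) = y \<bullet> (M *v x)" using sym_inner[OF symM] by blast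
  have swapK: "\<And>x y. x \<bullet> (K *v y) = y \<bullet> (K *v x)" using sym_inner[OF symK] by blast
  have Eeig: "\<And>j. j < k \<Longrightarrow> K *v v j = \<mu> j *\<^sub>R (M *v v j)"
   and Eon: "\<And>j l. j < k \<Longrightarrow> l < k \<Longrightarrow> v j \<bullet> (M *v v l) = (if j = l then 1 else 0)"
   and Esort: "\<And>j l. j \<le> l \<Longrightarrow> l < k \<Longrightarrow> \<mu> j \<le> \<mu> l"
   and Emin: "\<And>j x. j < k \<Longrightarrow> (\<forall>l<j. v l \<bullet> (M *v x) = 0) \<Longrightarrow> \<mu> j * (x \<bullet> (M *v x)) \<le> x \<bullet> (K *v x)"
    using E unfolding eigsys_def by auto
  define W where "W = {x. \<forall>l<k. v l \<bullet> (M *v x) = 0}"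
  have subW: "subspace W"
    unfolding subspace_def W_def
    by (auto simp: matrix_vector_right_distrib matrix_vector_mult_scaleR inner_add_right)
  have closedW: "closed W" by (rule closed_subspace[OF subW])
  obtain z where z: "z \<noteq> 0" "\<forall>l<k. (M *v v l) \<bullet> z = 0"
    using orth_nonzero[OF kn, of "\<lambda>l. M *v v l"] by blast
  have zW: "z \<in> W" unfolding W_def using z(2) swapM by (simp add: inner_commute)
  define S where "S = W \<inter> sphere 0 1"
  have cS: "compact S" unfolding S_def by (rule closed_Int_compact[OF closedW compact_sphere])
  have nS: "S \<noteq> {}"
  proof -
    have "(1 / norm z) *\<^sub>R z \<in> S" unfolding S_def using z(1) subspace_scale[OF subW zW] by simp
    then show ?thesis by blast
  qed
  define R where "R x = (x \<bullet> (K *v x)) / (x \<bullet> (M *v x))" for x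
  have contR: "continuous_on S R"
  proof -
    have "\<forall>x\<in>S. x \<bullet> (M *v x) \<noteq> 0"
    proof
      fix x assume "x \<in> S" then have "x \<noteq> 0" unfolding S_def by auto
      from Mpos[OF this] show "x \<bullet> (M *v x) \<noteq> 0" by simp
    qed
    then show ?thesis unfolding R_def by (intro continuous_on_divide cont_quad)
  qed
  obtain w where wS: "w \<in> S" and wmin: "\<And>y. y \<in> S \<Longrightarrow> R w \<le> R y"
    using continuous_attains_inf[OF cS nS contR] by blast
  define c where "c = R w"
  have wW: "w \<in> W" and w0: "w \<noteq> 0" using wS unfolding S_def by auto
  have wpos: "0 < w \<bullet> (M *v w)" using Mpos[OF w0] .
  have cw: "w \<bullet> (K *v w) = c * (w \<bullet> (M *v w))" unfolding c_def R_def using wpos by simp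
  have claim1: "c * (x \<bullet> (M *v x)) \<le> x \<bullet> (K *v x)" if xW: "x \<in> W" for x
  proof (cases "x = 0")
    case True then show ?thesis by simp
  next
    case False
    define y where "y = (1 / norm x) *\<^sub>R x"
    have yS: "y \<in> S" unfolding S_def y_def using False subspace_scale[OF subW xW] by simp
    have "R y = R x" unfolding R_def y_def quad_scale using False by simp
    then have "c \<le> R x" using wmin[OF yS] unfolding c_def by simp
    then show ?thesis unfolding R_def using Mpos[OF False] by (simp add: pos_le_divide_eq)
  qed
  have claim2: "y \<bullet> (K *v w) = c * (y \<bullet> (M *v w))" if yW: "y \<in> W" for y
  proof -
    have "0 \<le> 2*t*(y \<bullet> (K *v w) - c * (y \<bullet> (M *v w))) + t^2*(y \<bullet> (K *v y) - c * (y \<bullet> (M *v y)))" for t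
    proof -
      have "w + t *\<^sub>R y \<in> W" by (rule subspace_add[OF subW wW subspace_scale[OF subW yW]])
      from claim1[OF this] show ?thesis unfolding quad_expand[OF symK] quad_expand[OF symM]
        using cw by (simp add: algebra_simps)
    qed
    then have "y \<bullet> (K *v w) - c * (y \<bullet> (M *v w)) = 0" by (rule lin_coef_zero)
    then show ?thesis by simp
  qed
  define d where "d = K *v w - c *\<^sub>R (M *v w)"
  have vd: "v l \<bullet> d = 0" if "l < k" for l
  proof -
    have "v l \<bullet> (K *v w) = w \<bullet> (K *v v l)" by (rule swapK)
    also have "\<dots> = \<mu> l * (w \<bullet> (M *v v l))" using Eeig[OF that] by simp
    also have "w \<bullet> (M *v v l) = v l \<bullet> (M *v w)" by (rule swapM)
    also have "\<dots> = 0" using wW that unfolding W_def by simp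
    finally show ?thesis unfolding d_def using wW that by (simp add: W_def inner_diff_right)
  qed
  define r where "r = d - (\<Sum>l<k. (v l \<bullet> (M *v d)) *\<^sub>R v l)"
  have rW: "r \<in> W"
  proof -
    have "v j \<bullet> (M *v r) = 0" if "j < k" for j
    proof -
      have "v j \<bullet> (M *v (\<Sum>l<k. (v l \<bullet> (M *v d)) *\<^sub>R v l))
          = (\<Sum>l<k. (v l \<bullet> (M *v d)) * (v j \<bullet> (M *v v l)))"
        by (simp add: mv_sum inner_sum_right matrix_vector_mult_scaleR)
      also have "\<dots> = (\<Sum>l<k. if l = j then v l \<bullet> (M *v d) else 0)"
        by (rule sum.cong) (auto simp: Eon that)
      also have "\<dots> = v j \<bullet> (M *v d)" using that by simp
      finally show ?thesis unfolding r_def by (simp add: matrix_vector_mult_diff_distrib inner_diff_right)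
    qed
    then show ?thesis unfolding W_def by simp
  qed
  have "d \<bullet> d = 0"
  proof -
    have eq: "d = r + (\<Sum>l<k. (v l \<bullet> (M *v d)) *\<^sub>R v l)" unfolding r_def by simp
    have "d \<bullet> d = (r + (\<Sum>l<k. (v l \<bullet> (M *v d)) *\<^sub>R v l)) \<bullet> d"
      using eq by (rule arg_cong)
    also have "\<dots> = r \<bullet> d + (\<Sum>l<k. (v l \<bullet> (M *v d)) * (v l \<bullet> d))"
      by (simp only: inner_add_left inner_sum_left inner_scaleR_left)
    finally have "d \<bullet> d = r \<bullet> d + (\<Sum>l<k. (v l \<bullet> (M *v d)) * (v l \<bullet> d))" .
    also have "(\<Sum>l<k. (v l \<bullet> (M *v d)) * (v l \<bullet> d)) = 0" by (simp add: vd)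
    also have "r \<bullet> d = 0" unfolding d_def using claim2[OF rW] by (simp add: inner_diff_right)
    finally show ?thesis by simp
  qed
  then have eig: "K *v w = c *\<^sub>R (M *v w)" unfolding d_def by simp
  define s where "s = 1 / sqrt (w \<bullet> (M *v w))"
  define w' where "w' = s *\<^sub>R w"
  have w'eig: "K *v w' = c *\<^sub>R (M *v w')" unfolding w'_def using eig by (simp add: matrix_vector_mult_scaleR)
  have w'n: "w' \<bullet> (M *v w') = 1" unfolding w'_def quad_scale s_def using wpos
    by (simp add: power_divide)
  have w'W: "w' \<in> W" unfolding w'_def by (rule subspace_scale[OF subW wW])
  have w'o1: "v l \<bullet> (M *v w') = 0" if "l < k" for l using w'W that unfolding W_def by simp
  have w'o2: "w' \<bullet> (M *v v l) = 0" if "l < k" for l using w'o1[OF that] swapM by metis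
  have csort: "\<mu> j \<le> c" if "j < k" for j
  proof -
    have k1: "k - 1 < k" using that by simp
    have "\<forall>l<k-1. v l \<bullet> (M *v w) = 0" using wW unfolding W_def by simp
    from Emin[OF k1 this] have "\<mu> (k-1) * (w \<bullet> (M *v w)) \<le> c * (w \<bullet> (M *v w))" using cw by simp
    then have "\<mu> (k-1) \<le> c" using wpos by simp
    moreover have "\<mu> j \<le> \<mu> (k-1)" using Esort[of j "k-1"] that by simp
    ultimately show ?thesis by simp
  qed
  have "eigsys K M (Suc k) (v(k := w')) (\<mu>(k := c))"
    unfolding eigsys_def
  proof (intro conjI allI impI)
    fix j assume "j < Suc k"
    then show "K *v (v(k := w')) j = (\<mu>(k := c)) j *\<^sub>R (M *v (v(k := w')) j)"
      using Eeig w'eig by (cases "j = k") auto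
  next
    fix j l assume "j < Suc k" "l < Suc k"
    then show "(v(k := w')) j \<bullet> (M *v (v(k := w')) l) = (if j = l then 1 else 0)"
      using Eon w'n w'o1 w'o2 by (cases "j = k"; cases "l = k") auto
  next
    fix j l assume "j \<le> l" "l < Suc k"
    then show "(\<mu>(k := c)) j \<le> (\<mu>(k := c)) l"
      using Esort csort by (cases "j = k"; cases "l = k") auto
  next
    fix j x assume j: "j < Suc k" and h: "\<forall>l<j. (v(k := w')) l \<bullet> (M *v x) = 0"
    show "(\<mu>(k := c)) j * (x \<bullet> (M *v x)) \<le> x \<bullet> (K *v x)"
    proof (cases "j = k")
      case True
      then have "x \<in> W" using h unfolding W_def by auto
      then show ?thesis using claim1 True by simp
    next
      case False
      then have "j < k" using j by simp
      moreover have "\<forall>l<j. v l \<bullet> (M *v x) = 0" using h \<open>j < k\<close> by auto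
      ultimately show ?thesis using Emin False by simp
    qed
  qed
  then show ?thesis by blast
qed

lemma eigsys_exists:
  fixes K M :: "real^'n^'n"
  assumes symK: "sym_mat K" and pdM: "pd_mat M"
  shows "k \<le> CARD('n) \<Longrightarrow> \<exists>v \<mu>. eigsys K M k v \<mu>"
proof (induction k)
  case 0 then show ?case by (auto simp: eigsys_def)
next
  case (Suc k)
  then obtain v \<mu> where "eigsys K M k v \<mu>" by auto
  from eigsys_step[OF symK pdM this] Suc.prems show ?case by auto
qed



lemma poly_det: "poly (det A) x = det (\<chi> i j. poly (A$i$j) x)"
  unfolding det_def by (simp add: poly_sum poly_prod)

lemma poly_gen_charpoly: "poly (gen_charpoly K M) x = det (K - x *\<^sub>R M)"
  unfolding gen_charpoly_def poly_det
  by (rule arg_cong[where f=det]) (simp add: vec_eq_iff algebra_simps)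

lemma sandwich: "(transpose V ** A ** V) $ a $ b = column a V \<bullet> (A *v column b (V::real^'n^'n))"
proof -
  have 1: "(transpose V ** A ** V) $ a $ b = (\<Sum>k\<in>UNIV. \<Sum>j\<in>UNIV. V$j$a * A$j$k * V$k$b)"
    by (simp add: matrix_matrix_mult_def transpose_def sum_distrib_right)
  have 2: "column a V \<bullet> (A *v column b V) = (\<Sum>j\<in>UNIV. \<Sum>k\<in>UNIV. V$j$a * A$j$k * V$k$b)"
    by (simp add: matrix_vector_mult_def inner_vec_def column_def sum_distrib_left mult.assoc)
  show ?thesis unfolding 1 2 by (rule sum.swap)
qed
lemma sum_single_mset: "(\<Sum>j<n. {#f j#}) = mset (map f [0..<n])"
  by (induction n) auto

lemma spectral_roots:
  fixes K M :: "real^'n^'n"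
  assumes symK: "sym_mat K" and pdM: "pd_mat M" and E: "eigsys K M CARD('n) v \<mu>"
  shows "sorted_list_of_multiset (proots (gen_charpoly K M)) = map \<mu> [0..<CARD('n)]"
proof -
  let ?n = "CARD('n)"
  have Eeig: "\<And>j. j < ?n \<Longrightarrow> K *v v j = \<mu> j *\<^sub>R (M *v v j)"
   and Eon: "\<And>j l. j < ?n \<Longrightarrow> l < ?n \<Longrightarrow> v j \<bullet> (M *v v l) = (if j = l then 1 else 0)"
   and Esort: "\<And>j l. j \<le> l \<Longrightarrow> l < ?n \<Longrightarrow> \<mu> j \<le> \<mu> l"
    using E unfolding eigsys_def by auto
  obtain h :: "'n \<Rightarrow> nat" where h: "bij_betw h UNIV {0..<?n}"
    using ex_bij_betw_finite_nat[of "UNIV :: 'n set"] by auto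
  have hlt: "h a < ?n" for a using h by (auto simp: bij_betw_def)
  have hinj: "h a = h b \<longleftrightarrow> a = b" for a b using h by (auto simp: bij_betw_def inj_def)
  define V :: "real^'n^'n" where "V = (\<chi> i a. v (h a) $ i)"
  have colV: "column a V = v (h a)" for a by (simp add: V_def column_def vec_eq_iff)
  have VMV: "transpose V ** M ** V = mat 1"
    by (simp add: vec_eq_iff sandwich colV Eon hlt hinj mat_def)
  have dV: "det V * det M * det V = 1"
    using arg_cong[OF VMV, of det] by (simp add: det_mul)
  have key: "det V * det (K - x *\<^sub>R M) * det V = (\<Prod>j<?n. \<mu> j - x)" for x
  proof -
    have D: "(transpose V ** (K - x *\<^sub>R M) ** V) $ a $ b = (if a = b then \<mu> (h a) - x else 0)" for a b
      by (simp add: sandwich colV matrix_vector_mult_diff_rdistrib scaleR_mv inner_diff_right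
          Eeig Eon hlt hinj)
    have "det V * det (K - x *\<^sub>R M) * det V = det (transpose V ** (K - x *\<^sub>R M) ** V)"
      by (simp add: det_mul)
    also have "\<dots> = (\<Prod>a\<in>UNIV. \<mu> (h a) - x)"
      by (subst det_diagonal) (auto simp: D)
    also have "\<dots> = (\<Prod>j\<in>{0..<?n}. \<mu> j - x)"
      by (rule prod.reindex_bij_betw[OF h])
    finally show ?thesis by (simp add: atLeast0LessThan)
  qed
  define c where "c = det V * det V"
  have c0: "c \<noteq> 0" using dV unfolding c_def by (metis mult.commute mult_zero_left mult.assoc zero_neq_one)
  have P: "gen_charpoly K M = smult (1 / c) (\<Prod>j<?n. [:\<mu> j, -1:])"
  proof (rule poly_eq_poly_eq_iff[THEN iffD1], rule ext)
    fix x
    have "c * poly (gen_charpoly K M) x = (\<Prod>j<?n. \<mu> j - x)"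
      using key[of x] unfolding c_def poly_gen_charpoly by (simp add: mult_ac)
    then show "poly (gen_charpoly K M) x = poly (smult (1 / c) (\<Prod>j<?n. [:\<mu> j, -1:])) x"
      using c0 by (simp add: poly_prod field_simps)
  qed
  have lin: "proots [:\<mu> j, -1:] = {#\<mu> j#}" for j
  proof -
    have "[:\<mu> j, -1:] = - [:- \<mu> j, 1:]" by simp
    then show ?thesis by (simp only: proots_uminus proots_linear_factor) simp
  qed
  have "proots (gen_charpoly K M) = (\<Sum>j<?n. {#\<mu> j#})"
    unfolding P using c0 by (subst proots_smult) (auto simp: proots_prod lin)
  also have "\<dots> = mset (map \<mu> [0..<?n])" by (rule sum_single_mset)
  finally have "proots (gen_charpoly K M) = mset (map \<mu> [0..<?n])" .
  moreover have "sorted (map \<mu> [0..<?n])"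
    by (auto simp: sorted_iff_nth_mono intro: Esort)
  ultimately show ?thesis by (metis sorted_list_of_multiset_mset sorted_sort_id)
qed

lemma gev_eigsys:
  fixes K M :: "real^'n^'n"
  assumes "sym_mat K" "pd_mat M" "eigsys K M CARD('n) v \<mu>" "1 \<le> i" "i \<le> CARD('n)"
  shows "gev K M i = \<mu> (i - 1)"
  using spectral_roots[OF assms(1-3)] assms(4,5) unfolding gev_def by simp

lemma basis_quad:
  fixes K M :: "real^'n^'n"
  assumes E: "eigsys K M k v \<mu>" and pk: "p < k"
  shows "(\<Sum>l\<le>p. a l *\<^sub>R v l) \<bullet> (M *v (\<Sum>l\<le>p. a l *\<^sub>R v l)) = (\<Sum>l\<le>p. (a l)^2)"
    and "(\<Sum>l\<le>p. a l *\<^sub>R v l) \<bullet> (K *v (\<Sum>l\<le>p. a l *\<^sub>R v l)) = (\<Sum>l\<le>p. (a l)^2 * \<mu> l)"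
proof -
  have Eeig: "\<And>j. j < k \<Longrightarrow> K *v v j = \<mu> j *\<^sub>R (M *v v j)"
   and Eon: "\<And>j l. j < k \<Longrightarrow> l < k \<Longrightarrow> v j \<bullet> (M *v v l) = (if j = l then 1 else 0)"
    using E unfolding eigsys_def by auto
  let ?x = "\<Sum>l\<le>p. a l *\<^sub>R v l"
  have "?x \<bullet> (M *v ?x) = (\<Sum>j\<le>p. \<Sum>l\<le>p. a j * a l * (v l \<bullet> (M *v v j)))"
    by (simp add: mv_sum inner_sum_left inner_sum_right matrix_vector_mult_scaleR sum_distrib_left mult_ac)
  also have "\<dots> = (\<Sum>j\<le>p. \<Sum>l\<le>p. if l = j then a j * a l else 0)"
    using pk by (intro sum.cong refl) (auto simp: Eon)
  also have "\<dots> = (\<Sum>l\<le>p. (a l)^2)" by (simp add: power2_eq_square)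
  finally show "?x \<bullet> (M *v ?x) = (\<Sum>l\<le>p. (a l)^2)" .
  have "?x \<bullet> (K *v ?x) = (\<Sum>j\<le>p. \<Sum>l\<le>p. a j * a l * (v l \<bullet> (K *v v j)))"
    by (simp add: mv_sum inner_sum_left inner_sum_right matrix_vector_mult_scaleR sum_distrib_left mult_ac)
  also have "\<dots> = (\<Sum>j\<le>p. \<Sum>l\<le>p. if l = j then a j * a l * \<mu> l else 0)"
    using pk by (intro sum.cong refl) (auto simp: Eon Eeig)
  also have "\<dots> = (\<Sum>l\<le>p. (a l)^2 * \<mu> l)" by (simp add: power2_eq_square)
  finally show "?x \<bullet> (K *v ?x) = (\<Sum>l\<le>p. (a l)^2 * \<mu> l)" .
qed

lemma comparison:
  fixes K M1 M2 :: "real^'n^'n"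
  assumes psdK: "psd_mat K" and pd1: "pd_mat M1" and pd2: "pd_mat M2"
    and le: "\<And>x. x \<bullet> (M1 *v x) \<le> c * (x \<bullet> (M2 *v x))"
    and i: "1 \<le> i" "i \<le> CARD('n)"
  shows "gev K M2 i \<le> c * gev K M1 i"
proof -
  let ?n = "CARD('n)"
  have symK: "sym_mat K" using psdK by (simp add: psd_mat_def)
  have symM2: "sym_mat M2" using pd2 by (simp add: pd_mat_def)
  have M2pos: "\<And>x. x \<noteq> 0 \<Longrightarrow> 0 < x \<bullet> (M2 *v x)" using pd2 by (simp add: pd_mat_def)
  obtain v \<mu> where E1: "eigsys K M1 ?n v \<mu>" using eigsys_exists[OF symK pd1] by blast
  obtain w \<nu> where E2: "eigsys K M2 ?n w \<nu>" using eigsys_exists[OF symK pd2] by blast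
  define p where "p = i - 1"
  have pn: "p < ?n" using i unfolding p_def by simp
  have g1: "gev K M1 i = \<mu> p" unfolding p_def by (rule gev_eigsys[OF symK pd1 E1 i])
  have g2: "gev K M2 i = \<nu> p" unfolding p_def by (rule gev_eigsys[OF symK pd2 E2 i])
  have Eeig: "\<And>j. j < ?n \<Longrightarrow> K *v v j = \<mu> j *\<^sub>R (M1 *v v j)"
   and Eon: "\<And>j l. j < ?n \<Longrightarrow> l < ?n \<Longrightarrow> v j \<bullet> (M1 *v v l) = (if j = l then 1 else 0)"
   and Esort: "\<And>j l. j \<le> l \<Longrightarrow> l < ?n \<Longrightarrow> \<mu> j \<le> \<mu> l"
    using E1 unfolding eigsys_def by auto
  have Fmin: "\<And>j x. j < ?n \<Longrightarrow> (\<forall>l<j. w l \<bullet> (M2 *v x) = 0) \<Longrightarrow> \<nu> j * (x \<bullet> (M2 *v x)) \<le> x \<bullet> (K *v x)"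
    using E2 unfolding eigsys_def by auto
  have mu_nn: "0 \<le> \<mu> p"
  proof -
    have "v p \<bullet> (K *v v p) = \<mu> p" using Eeig[OF pn] Eon[OF pn pn] by simp
    then show ?thesis using psdK unfolding psd_mat_def by metis
  qed
  define T where "T = v ` {..p}"
  have injv: "inj_on v {..p}"
  proof (rule inj_onI)
    fix j l assume "j \<in> {..p}" "l \<in> {..p}" "v j = v l"
    then have "v j \<bullet> (M1 *v v l) = 1" using Eon[of l l] pn by simp
    then show "j = l" using Eon[of j l] pn \<open>j \<in> {..p}\<close> \<open>l \<in> {..p}\<close> by (auto split: if_splits)
  qed
  have finT: "finite T" unfolding T_def by simp
  have sumT: "(\<Sum>y\<in>T. f y *\<^sub>R y) = (\<Sum>l\<le>p. f (v l) *\<^sub>R v l)" for f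
    unfolding T_def by (simp add: sum.reindex[OF injv])
  have coef: "v j \<bullet> (M1 *v (\<Sum>l\<le>p. a l *\<^sub>R v l)) = a j" if "j \<le> p" for a j
  proof -
    have "v j \<bullet> (M1 *v (\<Sum>l\<le>p. a l *\<^sub>R v l)) = (\<Sum>l\<le>p. a l * (v j \<bullet> (M1 *v v l)))"
      by (simp add: mv_sum inner_sum_right matrix_vector_mult_scaleR)
    also have "\<dots> = (\<Sum>l\<le>p. if l = j then a l else 0)"
      using pn that by (intro sum.cong refl) (auto simp: Eon)
    also have "\<dots> = a j" using that by simp
    finally show ?thesis .
  qed
  have indT: "independent T"
  proof (rule independent_if_scalars_zero[OF finT])
    fix f x assume "(\<Sum>y\<in>T. f y *\<^sub>R y) = 0" "x \<in> T"
    then obtain j where j: "j \<le> p" "x = v j" unfolding T_def by auto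
    have "(\<Sum>l\<le>p. f (v l) *\<^sub>R v l) = 0" using \<open>(\<Sum>y\<in>T. f y *\<^sub>R y) = 0\<close> sumT by simp
    then have "v j \<bullet> (M1 *v (\<Sum>l\<le>p. f (v l) *\<^sub>R v l)) = 0" by simp
    then show "f x = 0" using coef[OF j(1), of "\<lambda>l. f (v l)"] j by simp
  qed
  define B where "B = span T"
  have dimB: "dim B = Suc p"
    unfolding B_def dim_span using dim_eq_card_independent[OF indT] card_image[OF injv]
    unfolding T_def by simp
  define A where "A = span ((\<lambda>l. M2 *v w l) ` {..<p})"
  define C where "C = {y \<in> UNIV. \<forall>x\<in>A. orthogonal x y}"
  have "dim C + dim A = dim (UNIV :: (real^'n) set)"
    unfolding C_def A_def by (rule dim_subspace_orthogonal_to_vectors) auto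
  moreover have "dim A \<le> p"
  proof -
    have "dim ((\<lambda>l. M2 *v w l) ` {..<p}) \<le> card ((\<lambda>l. M2 *v w l) ` {..<p})"
      by (rule dim_le_card) (auto intro: span_base)
    then show ?thesis unfolding A_def using card_image_le[of "{..<p}" "\<lambda>l. M2 *v w l"] by (simp add: dim_span)
  qed
  ultimately have dimC: "dim C + p \<ge> ?n" by simp
  have subB: "subspace B" unfolding B_def by simp
  have subC: "subspace C" unfolding C_def using subspace_orthogonal_to_vectors[of A] by simp
  have "dim {x + y |x y. x \<in> B \<and> y \<in> C} + dim (B \<inter> C) = dim B + dim C"
    by (rule dim_sums_Int[OF subB subC])
  moreover have "dim {x + y |x y. x \<in> B \<and> y \<in> C} \<le> ?n"
    using dim_subset_UNIV[of "{x + y |x y. x \<in> B \<and> y \<in> C}"] by simp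
  ultimately have "dim (B \<inter> C) > 0" using dimB dimC by linarith
  then have "\<not> B \<inter> C \<subseteq> {0}" by (simp only: dim_eq_0[symmetric])
  then obtain x where xB: "x \<in> B" and xC: "x \<in> C" and x0: "x \<noteq> 0" by blast
  have "\<forall>l<p. w l \<bullet> (M2 *v x) = 0"
  proof (intro allI impI)
    fix l assume "l < p"
    then have "orthogonal (M2 *v w l) x" using xC unfolding C_def A_def by (auto intro: span_base)
    then show "w l \<bullet> (M2 *v x) = 0" using sym_inner[OF symM2, of "w l" x]
      by (simp add: orthogonal_def inner_commute)
  qed
  from Fmin[OF pn this] have low: "\<nu> p * (x \<bullet> (M2 *v x)) \<le> x \<bullet> (K *v x)" .
  obtain f where "x = (\<Sum>y\<in>T. f y *\<^sub>R y)" using xB unfolding B_def span_finite[OF finT] by auto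
  then have xe: "x = (\<Sum>l\<le>p. f (v l) *\<^sub>R v l)" using sumT by simp
  have "x \<bullet> (K *v x) = (\<Sum>l\<le>p. (f (v l))^2 * \<mu> l)" unfolding xe by (rule basis_quad(2)[OF E1 pn])
  also have "\<dots> \<le> (\<Sum>l\<le>p. (f (v l))^2 * \<mu> p)"
    using pn by (intro sum_mono mult_left_mono Esort) auto
  also have "\<dots> = \<mu> p * (x \<bullet> (M1 *v x))"
    unfolding xe basis_quad(1)[OF E1 pn] by (simp add: sum_distrib_left mult_ac)
  also have "\<dots> \<le> \<mu> p * (c * (x \<bullet> (M2 *v x)))" by (rule mult_left_mono[OF le mu_nn])
  finally have "\<nu> p * (x \<bullet> (M2 *v x)) \<le> (c * \<mu> p) * (x \<bullet> (M2 *v x))" using low by (simp add: mult_ac)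
  then have "\<nu> p \<le> c * \<mu> p" using M2pos[OF x0] by simp
  then show ?thesis using g1 g2 by simp
qed

lemma eig_pos:
  fixes K M :: "real^'n^'n"
  assumes pdK: "pd_mat K" and pdM: "pd_mat M" and i: "1 \<le> i" "i \<le> CARD('n)"
  shows "0 < gev K M i"
proof -
  have symK: "sym_mat K" using pdK by (simp add: pd_mat_def)
  obtain v \<mu> where E: "eigsys K M CARD('n) v \<mu>" using eigsys_exists[OF symK pdM] by blast
  have p: "i - 1 < CARD('n)" using i by simp
  have "v (i-1) \<bullet> (K *v v (i-1)) = \<mu> (i-1)"
    using E p unfolding eigsys_def by auto
  moreover have "v (i-1) \<noteq> 0" using E p unfolding eigsys_def by force
  ultimately have "0 < \<mu> (i-1)" using pdK unfolding pd_mat_def by metis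
  then show ?thesis using gev_eigsys[OF symK pdM E i] by simp
qed




lemma inner_vmul: "x \<bullet> (y v* L) = (L *v x) \<bullet> (y::real^'m)"
  by (metis dot_lmul_matrix inner_commute)

lemma quad_assemble:
  "x \<bullet> (assemble L A *v x) = (\<Sum>e\<in>UNIV. (L e *v x) \<bullet> (A e *v (L e *v (x::real^'n))))"
proof -
  have "assemble L A *v x = (\<Sum>e\<in>UNIV. (A e *v (L e *v x)) v* L e)"
    unfolding assemble_def sum_mv
    by (rule sum.cong) (simp_all add: matrix_vector_mul_assoc[symmetric])
  then show ?thesis by (simp add: inner_sum_right inner_vmul)
qed

lemma sym_assemble:
  assumes "\<And>e. sym_mat (A e)" shows "sym_mat (assemble L A)"
proof -
  have "transpose (transpose (L e) ** A e ** L e) = transpose (L e) ** A e ** L e" for e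
    using assms[of e] by (simp add: matrix_transpose_mul matrix_mul_assoc sym_mat_def)
  then show ?thesis unfolding sym_mat_def assemble_def
    by (simp add: vec_eq_iff transpose_def)
qed

lemma outer_mv: "outer v w *v y = (w \<bullet> y) *\<^sub>R (v::real^'m)"
  by (simp add: vec_eq_iff outer_def matrix_vector_mult_def inner_vec_def sum_distrib_left mult_ac)

lemma mod_mass_props:
  fixes Ke Me :: "real^'m^'m" and u :: "nat \<Rightarrow> real^'m"
  assumes pdM: "pd_mat Me"
    and lpos: "0 < gev Ke Me (CARD('m) - r)"
    and lsort: "\<And>k. k \<in> {1..r} \<Longrightarrow> gev Ke Me (CARD('m) - r) \<le> gev Ke Me (CARD('m) - r + k)
                  \<and> gev Ke Me (CARD('m) - r + k) \<le> gev Ke Me (CARD('m))"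
    and rho1: "gev Ke Me (CARD('m) - r) \<le> gev Ke Me (CARD('m))"
    and orth: "\<And>j k. j \<in> {1..r} \<Longrightarrow> k \<in> {1..r} \<Longrightarrow> u j \<bullet> (Me *v u k) = (if j = k then 1 else 0)"
  shows "sym_mat (mod_mass Ke Me r u)"
    and "y \<bullet> (Me *v y) \<le> y \<bullet> (mod_mass Ke Me r u *v y)"
    and "y \<bullet> (mod_mass Ke Me r u *v y) \<le> (gev Ke Me (CARD('m)) / gev Ke Me (CARD('m) - r)) * (y \<bullet> (Me *v y))"
proof -
  let ?l0 = "gev Ke Me (CARD('m) - r)"
  let ?lm = "gev Ke Me (CARD('m))"
  define g where "g k = gev Ke Me (CARD('m) - r + k) / ?l0 - 1" for k
  define \<rho> where "\<rho> = ?lm / ?l0"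
  have symM: "sym_mat Me" using pdM by (simp add: pd_mat_def)
  have Mnn: "0 \<le> x \<bullet> (Me *v x)" for x using pdM unfolding pd_mat_def
    by (cases "x = 0") (auto intro: less_imp_le)
  have MM: "mod_mass Ke Me r u = Me + (\<Sum>k\<in>{1..r}. g k *\<^sub>R outer (Me *v u k) (Me *v u k))"
    unfolding mod_mass_def g_def ..
  show "sym_mat (mod_mass Ke Me r u)"
    using symM unfolding MM sym_mat_def by (simp add: vec_eq_iff transpose_def outer_def mult.commute)
  have g0: "0 \<le> g k" if "k \<in> {1..r}" for k
    using lsort[OF that] lpos unfolding g_def by (simp add: le_divide_eq)
  have g1: "g k \<le> \<rho> - 1" if "k \<in> {1..r}" for k
    using lsort[OF that] lpos unfolding g_def \<rho>_def by (simp add: divide_right_mono)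
  define c where "c k = u k \<bullet> (Me *v y)" for k
  have quad: "y \<bullet> (mod_mass Ke Me r u *v y) = y \<bullet> (Me *v y) + (\<Sum>k\<in>{1..r}. g k * (c k)^2)"
  proof -
    have "(Me *v u k) \<bullet> y = c k" for k unfolding c_def using sym_inner[OF symM, of "u k" y]
      by (simp add: inner_commute)
    then show ?thesis unfolding MM
      by (simp add: matrix_vector_mult_add_rdistrib sum_mv scaleR_mv outer_mv inner_add_right
          inner_sum_right power2_eq_square mult_ac inner_commute)
  qed
  have bessel: "(\<Sum>k\<in>{1..r}. (c k)^2) \<le> y \<bullet> (Me *v y)"
  proof -
    define s where "s = (\<Sum>k\<in>{1..r}. c k *\<^sub>R u k)"
    have sMy: "s \<bullet> (Me *v y) = (\<Sum>k\<in>{1..r}. (c k)^2)"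
      unfolding s_def by (simp add: inner_sum_left c_def power2_eq_square)
    have "s \<bullet> (Me *v s) = (\<Sum>j\<in>{1..r}. \<Sum>k\<in>{1..r}. c j * c k * (u k \<bullet> (Me *v u j)))"
      unfolding s_def
      by (simp add: mv_sum inner_sum_left inner_sum_right matrix_vector_mult_scaleR sum_distrib_left mult_ac)
    also have "\<dots> = (\<Sum>j\<in>{1..r}. \<Sum>k\<in>{1..r}. if k = j then c j * c k else 0)"
      by (intro sum.cong refl) (auto simp: orth)
    also have "\<dots> = (\<Sum>k\<in>{1..r}. (c k)^2)" by (simp add: power2_eq_square)
    finally have sMs: "s \<bullet> (Me *v s) = (\<Sum>k\<in>{1..r}. (c k)^2)" .
    have "0 \<le> (y + (-1) *\<^sub>R s) \<bullet> (Me *v (y + (-1) *\<^sub>R s))" by (rule Mnn)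
    also have "\<dots> = y \<bullet> (Me *v y) - (\<Sum>k\<in>{1..r}. (c k)^2)"
      unfolding quad_expand[OF symM] sMy sMs by simp
    finally show ?thesis by simp
  qed
  have "0 \<le> (\<Sum>k\<in>{1..r}. g k * (c k)^2)" by (intro sum_nonneg mult_nonneg_nonneg g0) auto
  then show "y \<bullet> (Me *v y) \<le> y \<bullet> (mod_mass Ke Me r u *v y)" unfolding quad by simp
  have "(\<Sum>k\<in>{1..r}. g k * (c k)^2) \<le> (\<Sum>k\<in>{1..r}. (\<rho> - 1) * (c k)^2)"
    by (intro sum_mono mult_right_mono g1) auto
  also have "\<dots> = (\<rho> - 1) * (\<Sum>k\<in>{1..r}. (c k)^2)" by (simp add: sum_distrib_left)
  also have "\<dots> \<le> (\<rho> - 1) * (y \<bullet> (Me *v y))"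
  proof (rule mult_left_mono[OF bessel])
    show "0 \<le> \<rho> - 1" using rho1 lpos unfolding \<rho>_def by (simp add: le_divide_eq)
  qed
  finally show "y \<bullet> (mod_mass Ke Me r u *v y) \<le> ?lm / ?l0 * (y \<bullet> (Me *v y))"
    unfolding quad \<rho>_def by (simp add: algebra_simps)
qed

lemma pd_assemble:
  fixes L :: "'e::finite \<Rightarrow> real^'n::finite^'m::finite" and A :: "'e \<Rightarrow> real^'m^'m"
  assumes L_struct: "\<exists>idx :: 'e \<Rightarrow> 'm \<Rightarrow> 'n.
              (\<forall>e. inj (idx e) \<and> L e = (\<chi> a b. if b = idx e a then 1 else 0))
            \<and> (\<forall>i. \<exists>e a. idx e a = i)"
    and pd: "\<And>e. pd_mat (A e)"
  shows "pd_mat (assemble L A)"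
proof -
  obtain idx :: "'e \<Rightarrow> 'm \<Rightarrow> 'n" where Le: "\<And>e. L e = (\<chi> a b. if b = idx e a then 1 else 0)"
    and cov: "\<And>i. \<exists>e a. idx e a = i" using L_struct by blast
  have nn: "0 \<le> y \<bullet> (A e *v y)" for e y using pd[of e] unfolding pd_mat_def
    by (cases "y = 0") (auto intro: less_imp_le)
  have "sym_mat (assemble L A)" by (rule sym_assemble) (use pd in \<open>simp add: pd_mat_def\<close>)
  moreover have "0 < x \<bullet> (assemble L A *v x)" if "x \<noteq> 0" for x
  proof -
    obtain i where i: "x $ i \<noteq> 0" using \<open>x \<noteq> 0\<close> by (metis vec_eq_iff zero_index)
    obtain e a where ea: "idx e a = i" using cov by blast
    have "(L e *v x) $ a = x $ i"
      unfolding Le ea[symmetric] by (simp add: matrix_vector_mult_def if_distrib[of "\<lambda>c. c * _"] cong: if_cong)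
    then have "L e *v x \<noteq> 0" using i by auto
    then have pos: "0 < (L e *v x) \<bullet> (A e *v (L e *v x))" using pd[of e] unfolding pd_mat_def by blast
    have "(L e *v x) \<bullet> (A e *v (L e *v x)) \<le> (\<Sum>e\<in>UNIV. (L e *v x) \<bullet> (A e *v (L e *v x)))"
      by (rule member_le_sum) (auto intro: nn)
    then show ?thesis unfolding quad_assemble using pos by linarith
  qed
  ultimately show ?thesis unfolding pd_mat_def by blast
qed

theorem mainTheorem4:
  fixes L :: "'e::finite \<Rightarrow> real^'n::finite^'m::finite"
    and Ke Me :: "'e \<Rightarrow> real^'m^'m"
    and r :: nat
    and u :: "'e \<Rightarrow> nat \<Rightarrow> real^'m"
  assumes L_struct: "\<exists>idx :: 'e \<Rightarrow> 'm \<Rightarrow> 'n.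
              (\<forall>e. inj (idx e) \<and> L e = (\<chi> a b. if b = idx e a then 1 else 0))
            \<and> (\<forall>i. \<exists>e a. idx e a = i)"
    and Ke_psd: "\<And>e. psd_mat (Ke e)"
    and K_pd: "pd_mat (assemble L Ke)"
    and Me_pd: "\<And>e. pd_mat (Me e)"
    and r_pos: "0 < r" and r_lt: "r < CARD('m)"
    and lam_pos: "\<And>e. gev (Ke e) (Me e) (CARD('m) - r) > 0"
    and u_eig: "\<And>e k. k \<in> {1..r} \<Longrightarrow>
              Ke e *v u e k = gev (Ke e) (Me e) (CARD('m) - r + k) *\<^sub>R (Me e *v u e k)"
    and u_orth: "\<And>e j k. j \<in> {1..r} \<Longrightarrow> k \<in> {1..r} \<Longrightarrow>
              u e j \<bullet> (Me e *v u e k) = (if j = k then 1 else 0)"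
  shows "\<forall>i\<in>{1..CARD('n)}.
      let K = assemble L Ke;
          M = assemble L Me;
          Mbar = assemble L (\<lambda>e. mod_mass (Ke e) (Me e) r (u e));
          \<omega> = sqrt (gev K M i);
          \<omega>bar = sqrt (gev K Mbar i)
      in 1 \<le> \<omega> / \<omega>bar \<and>
         \<omega> / \<omega>bar \<le> (MAX e. sqrt (gev (Ke e) (Me e) (CARD('m))) / sqrt (gev (Ke e) (Me e) (CARD('m) - r)))"
proof -
  let ?m = "CARD('m)"
  let ?n = "CARD('n)"
  define K where "K = assemble L Ke"
  define M where "M = assemble L Me"
  define Mb where "Mb = assemble L (\<lambda>e. mod_mass (Ke e) (Me e) r (u e))"
  define lam where "lam e j = gev (Ke e) (Me e) j" for e j
  define \<rho> where "\<rho> e = lam e ?m / lam e (?m - r)" for e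
  define C where "C = Max (range \<rho>)"
  have lam_mono: "lam e j \<le> lam e l" if "1 \<le> j" "j \<le> l" "l \<le> ?m" for e j l
  proof -
    have symK: "sym_mat (Ke e)" using Ke_psd[of e] by (simp add: psd_mat_def)
    obtain v \<mu> where E: "eigsys (Ke e) (Me e) ?m v \<mu>" using eigsys_exists[OF symK Me_pd[of e]] by blast
    have "lam e j = \<mu> (j - 1)" unfolding lam_def by (rule gev_eigsys[OF symK Me_pd E]) (use that in auto)
    moreover have "lam e l = \<mu> (l - 1)" unfolding lam_def by (rule gev_eigsys[OF symK Me_pd E]) (use that in auto)
    moreover have "\<mu> (j - 1) \<le> \<mu> (l - 1)" using E that unfolding eigsys_def by auto
    ultimately show ?thesis by simp
  qed
  have elem: "sym_mat (mod_mass (Ke e) (Me e) r (u e))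
     \<and> y \<bullet> (Me e *v y) \<le> y \<bullet> (mod_mass (Ke e) (Me e) r (u e) *v y)
     \<and> y \<bullet> (mod_mass (Ke e) (Me e) r (u e) *v y) \<le> \<rho> e * (y \<bullet> (Me e *v y))" for e y
  proof -
    have s: "gev (Ke e) (Me e) (?m - r) \<le> gev (Ke e) (Me e) (?m - r + k)
                  \<and> gev (Ke e) (Me e) (?m - r + k) \<le> gev (Ke e) (Me e) ?m" if "k \<in> {1..r}" for k
      using lam_mono[of "?m - r" "?m - r + k" e] lam_mono[of "?m - r + k" ?m e] that r_lt
      unfolding lam_def by auto
    have r1: "gev (Ke e) (Me e) (?m - r) \<le> gev (Ke e) (Me e) ?m"
      using lam_mono[of "?m - r" ?m e] r_lt unfolding lam_def by auto
    show ?thesis using mod_mass_props[where Ke="Ke e" and Me="Me e" and u="u e" and r=r, OF Me_pd[of e] lam_pos[of e] s r1 u_orth]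
      unfolding \<rho>_def lam_def by blast
  qed
  have finR: "finite (range \<rho>)" by simp
  have rhoC: "\<rho> e \<le> C" for e unfolding C_def by (rule Max_ge[OF finR]) simp
  have nn: "0 \<le> y \<bullet> (Me e *v y)" for e y using Me_pd[of e] unfolding pd_mat_def
    by (cases "y = 0") (auto intro: less_imp_le)
  have Kpd: "pd_mat K" unfolding K_def by (rule K_pd)
  have Kpsd: "psd_mat K" using Kpd unfolding pd_mat_def psd_mat_def
    by (metis less_imp_le inner_zero_left order_refl)
  have Mpd: "pd_mat M" unfolding M_def by (rule pd_assemble[OF L_struct Me_pd])
  have le1: "x \<bullet> (M *v x) \<le> x \<bullet> (Mb *v x)" for x
    unfolding M_def Mb_def quad_assemble by (intro sum_mono) (use elem in blast)
  have le2: "x \<bullet> (Mb *v x) \<le> C * (x \<bullet> (M *v x))" for x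
  proof -
    have "x \<bullet> (Mb *v x) \<le> (\<Sum>e\<in>UNIV. \<rho> e * ((L e *v x) \<bullet> (Me e *v (L e *v x))))"
      unfolding Mb_def quad_assemble by (intro sum_mono) (use elem in blast)
    also have "\<dots> \<le> (\<Sum>e\<in>UNIV. C * ((L e *v x) \<bullet> (Me e *v (L e *v x))))"
      by (intro sum_mono mult_right_mono rhoC nn)
    also have "\<dots> = C * (x \<bullet> (M *v x))" unfolding M_def quad_assemble by (simp add: sum_distrib_left)
    finally show ?thesis .
  qed
  have Mbpd: "pd_mat Mb"
  proof -
    have "sym_mat Mb" unfolding Mb_def by (rule sym_assemble) (use elem in blast)
    moreover have "0 < x \<bullet> (Mb *v x)" if "x \<noteq> 0" for x
      using le1[of x] Mpd that unfolding pd_mat_def by (meson less_le_trans)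
    ultimately show ?thesis unfolding pd_mat_def by blast
  qed
  have "C \<in> range \<rho>" unfolding C_def by (rule Max_in[OF finR]) simp
  then obtain e0 where e0: "C = \<rho> e0" by blast
  have maxge: "sqrt (lam e0 ?m) / sqrt (lam e0 (?m - r))
      \<le> (MAX e. sqrt (gev (Ke e) (Me e) ?m) / sqrt (gev (Ke e) (Me e) (?m - r)))"
    unfolding lam_def by (rule Max_ge) auto
  show ?thesis
  proof (intro ballI)
    fix i assume i: "i \<in> {1..?n}"
    then have i1: "1 \<le> i" and i2: "i \<le> ?n" by auto
    define l where "l = gev K M i"
    define lb where "lb = gev K Mb i"
    have lpos: "0 < l" unfolding l_def by (rule eig_pos[OF Kpd Mpd i1 i2])
    have lbpos: "0 < lb" unfolding lb_def by (rule eig_pos[OF Kpd Mbpd i1 i2])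
    have c1: "lb \<le> 1 * l" unfolding l_def lb_def
      by (rule comparison[OF Kpsd Mpd Mbpd _ i1 i2]) (simp add: le1)
    have c2: "l \<le> C * lb" unfolding l_def lb_def
      by (rule comparison[OF Kpsd Mbpd Mpd le2 i1 i2])
    have sb: "0 < sqrt lb" using lbpos by simp
    have A: "1 \<le> sqrt l / sqrt lb" using c1 sb by (simp add: le_divide_eq)
    have "sqrt l \<le> sqrt (C * lb)" using c2 by simp
    also have "\<dots> = sqrt C * sqrt lb" by (simp add: real_sqrt_mult)
    finally have "sqrt l / sqrt lb \<le> sqrt C" using sb by (simp add: divide_le_eq)
    also have "sqrt C = sqrt (lam e0 ?m) / sqrt (lam e0 (?m - r))"
      unfolding e0 \<rho>_def by (simp add: real_sqrt_divide)
    finally have B: "sqrt l / sqrt lb \<le> (MAX e. sqrt (gev (Ke e) (Me e) ?m) / sqrt (gev (Ke e) (Me e) (?m - r)))"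
      using maxge by linarith
    show "let K = assemble L Ke;
          M = assemble L Me;
          Mbar = assemble L (\<lambda>e. mod_mass (Ke e) (Me e) r (u e));
          \<omega> = sqrt (gev K M i);
          \<omega>bar = sqrt (gev K Mbar i)
      in 1 \<le> \<omega> / \<omega>bar \<and>
         \<omega> / \<omega>bar \<le> (MAX e. sqrt (gev (Ke e) (Me e) (CARD('m))) / sqrt (gev (Ke e) (Me e) (CARD('m) - r)))"
      unfolding Let_def using A B unfolding l_def lb_def K_def M_def Mb_def by blast
  qed
qed


end
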